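(* Let $E=\begin{bmatrix}\widetilde E&0\\0&0\end{bmatrix}$ be a $(0,1,-1)$ matrix such that $E\mathbf 1=0$ and $\mathbf 1^TE=0^T$. Then $E$ is realizable if and only if $\widetilde E$ is realizable.
   Context: Two $(0,1)$ matrices $A,B$ are Gram mates if $AA^T=BB^T$, $A^TA=B^TB$ and $A\neq B$. A $(0,1,-1)$ matrix $F$ with $F\mathbf 1=0$ and $\mathbf 1^TF=0^T$ is realizable if there is a $(0,1)$ matrix $A$ such that $A$ and $A+F$ are Gram mates. *)

theory Defs
  imports "Jordan_Normal_Form.Matrix"
begin

definition ones_vec :: "nat \<Rightarrow> int vec" where
  "ones_vec n = vec n (\<lambda>_. 1)"

definition zero_one_mat :: "int mat \<Rightarrow> bool" where
  "zero_one_mat A \<longleftrightarrow> (\<forall>i<dim_row A. \<forall>j<dim_col A. A $$ (i,j) \<in> {0,1})"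

definition zero_one_neg_mat :: "int mat \<Rightarrow> bool" where
  "zero_one_neg_mat F \<longleftrightarrow> (\<forall>i<dim_row F. \<forall>j<dim_col F. F $$ (i,j) \<in> {0,1,-1})"

definition zero_line_sums :: "int mat \<Rightarrow> bool" where
  "zero_line_sums F \<longleftrightarrow>
     F *\<^sub>v ones_vec (dim_col F) = 0\<^sub>v (dim_row F) \<and>
     transpose_mat F *\<^sub>v ones_vec (dim_row F) = 0\<^sub>v (dim_col F)"

definition gram_mates :: "int mat \<Rightarrow> int mat \<Rightarrow> bool" where
  "gram_mates A B \<longleftrightarrow>
     zero_one_mat A \<and> zero_one_mat B \<and>
     dim_row A = dim_row B \<and> dim_col A = dim_col B \<and>
     A * transpose_mat A = B * transpose_mat B \<and>
     transpose_mat A * A = transpose_mat B * B \<and> A \<noteq> B"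

definition realizable :: "int mat \<Rightarrow> bool" where
  "realizable F \<longleftrightarrow> zero_one_neg_mat F \<and> zero_line_sums F \<and>
     (\<exists>A. A \<in> carrier_mat (dim_row F) (dim_col F) \<and> zero_one_mat A \<and> gram_mates A (A + F))"

end

theory Submission
  imports Defs
begin

lemma blk_eq_tl:
  assumes "A \<in> carrier_mat nr1 nc1" "A' \<in> carrier_mat nr1 nc1"
    "D \<in> carrier_mat nr2 nc2" "D' \<in> carrier_mat nr2 nc2"
    "four_block_mat A B C D = four_block_mat A' B' C' D'"
  shows "A = A'"
proof -
  have "A $$ (i,j) = A' $$ (i,j)" if "i < nr1" "j < nc1" for i j
  proof -
    have "four_block_mat A B C D $$ (i,j) = A $$ (i,j)"
      "four_block_mat A' B' C' D' $$ (i,j) = A' $$ (i,j)" using assms(1-4) that by auto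
    moreover have "four_block_mat A B C D $$ (i,j) = four_block_mat A' B' C' D' $$ (i,j)"
      using assms(5) by (rule arg_cong)
    ultimately show ?thesis by simp
  qed
  then show ?thesis using assms(1,2) by (intro eq_matI) auto
qed

lemma ones_split: "ones_vec (n + q) = ones_vec n @\<^sub>v ones_vec q"
  by (rule eq_vecI) (auto simp: ones_vec_def)

lemma ones_carrier[simp]: "ones_vec n \<in> carrier_vec n"
  by (simp add: ones_vec_def)

lemma blk_mult_ones:
  assumes X: "X \<in> carrier_mat m n"
    and h: "four_block_mat X (0\<^sub>m m q) (0\<^sub>m p n) (0\<^sub>m p q) *\<^sub>v ones_vec (n + q) = 0\<^sub>v (m + p)"
  shows "X *\<^sub>v ones_vec n = 0\<^sub>v m"
proof -
  have "four_block_mat X (0\<^sub>m m q) (0\<^sub>m p n) (0\<^sub>m p q) *\<^sub>v ones_vec (n + q)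
     = (X *\<^sub>v ones_vec n + 0\<^sub>m m q *\<^sub>v ones_vec q) @\<^sub>v (0\<^sub>m p n *\<^sub>v ones_vec n + 0\<^sub>m p q *\<^sub>v ones_vec q)"
    unfolding ones_split by (rule four_block_mat_mult_vec[OF X]) auto
  also have "\<dots> = (X *\<^sub>v ones_vec n) @\<^sub>v 0\<^sub>v p"
    using X by (auto simp: ones_vec_def)
  finally have e: "(X *\<^sub>v ones_vec n) @\<^sub>v 0\<^sub>v p = 0\<^sub>v (m + p)" using h by simp
  show ?thesis
  proof (rule eq_vecI)
    fix i assume "i < dim_vec (0\<^sub>v m :: int vec)"
    then have i: "i < m" by simp
    have "((X *\<^sub>v ones_vec n) @\<^sub>v 0\<^sub>v p) $ i = (X *\<^sub>v ones_vec n) $ i"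
      using i X by simp
    then show "(X *\<^sub>v ones_vec n) $ i = 0\<^sub>v m $ i" using e i
      by (metis index_zero_vec(1) trans_less_add1)
  qed (use X in simp)
qed

lemma blk_AAt:
  assumes c: "X1 \<in> carrier_mat m n" "X2 \<in> carrier_mat m q" "X3 \<in> carrier_mat p n" "X4 \<in> carrier_mat p q"
  shows "\<exists>R2 R3 R4. four_block_mat X1 X2 X3 X4 * transpose_mat (four_block_mat X1 X2 X3 X4)
     = four_block_mat (X1 * transpose_mat X1 + X2 * transpose_mat X2) R2 R3 R4 \<and> R4 \<in> carrier_mat p p"
proof -
  have e: "four_block_mat X1 X2 X3 X4 * transpose_mat (four_block_mat X1 X2 X3 X4)
    = four_block_mat (X1 * transpose_mat X1 + X2 * transpose_mat X2) (X1 * transpose_mat X3 + X2 * transpose_mat X4)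
       (X3 * transpose_mat X1 + X4 * transpose_mat X2) (X3 * transpose_mat X3 + X4 * transpose_mat X4)"
    unfolding transpose_four_block_mat[OF c] by (rule mult_four_block_mat) (use c in auto)
  have c4: "X3 * transpose_mat X3 + X4 * transpose_mat X4 \<in> carrier_mat p p" using c by auto
  show ?thesis using e c4 by blast
qed

lemma blk_AtA:
  assumes c: "X1 \<in> carrier_mat m n" "X2 \<in> carrier_mat m q" "X3 \<in> carrier_mat p n" "X4 \<in> carrier_mat p q"
  shows "\<exists>R2 R3 R4. transpose_mat (four_block_mat X1 X2 X3 X4) * four_block_mat X1 X2 X3 X4
     = four_block_mat (transpose_mat X1 * X1 + transpose_mat X3 * X3) R2 R3 R4 \<and> R4 \<in> carrier_mat q q"
proof -
  have e: "transpose_mat (four_block_mat X1 X2 X3 X4) * four_block_mat X1 X2 X3 X4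
    = four_block_mat (transpose_mat X1 * X1 + transpose_mat X3 * X3) (transpose_mat X1 * X2 + transpose_mat X3 * X4)
       (transpose_mat X2 * X1 + transpose_mat X4 * X3) (transpose_mat X2 * X2 + transpose_mat X4 * X4)"
    unfolding transpose_four_block_mat[OF c] by (rule mult_four_block_mat) (use c in auto)
  have c4: "transpose_mat X2 * X2 + transpose_mat X4 * X4 \<in> carrier_mat q q" using c by auto
  show ?thesis using e c4 by blast
qed

lemma add_cancel_mat:
  assumes "A \<in> carrier_mat r c" "B \<in> carrier_mat r c" "C \<in> carrier_mat r c" "A + C = B + (C :: int mat)"
  shows "A = B"
proof (rule eq_matI)
  fix i j assume ij: "i < dim_row B" "j < dim_col B"
  have "(A + C) $$ (i,j) = (B + C) $$ (i,j)" using assms(4) by simp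
  then show "A $$ (i,j) = B $$ (i,j)" using ij assms(1-3) by simp
qed (use assms in auto)

theorem proposition4p3:
  fixes Et :: "int mat" and m n p q :: nat
  assumes "Et \<in> carrier_mat m n"
    and "zero_one_neg_mat (four_block_mat Et (0\<^sub>m m q) (0\<^sub>m p n) (0\<^sub>m p q))"
    and "zero_line_sums (four_block_mat Et (0\<^sub>m m q) (0\<^sub>m p n) (0\<^sub>m p q))"
  shows "realizable (four_block_mat Et (0\<^sub>m m q) (0\<^sub>m p n) (0\<^sub>m p q)) \<longleftrightarrow> realizable Et"
proof
  note Et = assms(1)
  define E where "E = four_block_mat Et (0\<^sub>m m q) (0\<^sub>m p n) (0\<^sub>m p q)"
  have Ec: "E \<in> carrier_mat (m+p) (n+q)" unfolding E_def using Et by auto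
  assume "realizable E"
  then obtain A where A: "A \<in> carrier_mat (m+p) (n+q)" "zero_one_mat A" "gram_mates A (A + E)"
    unfolding realizable_def using Ec by auto
  obtain A1 A2 A3 A4 where sb: "split_block A m n = (A1,A2,A3,A4)" by (metis prod_cases4)
  note s = split_block[OF sb, of p q]
  have c: "A1 \<in> carrier_mat m n" "A2 \<in> carrier_mat m q" "A3 \<in> carrier_mat p n" "A4 \<in> carrier_mat p q"
    and Aeq: "A = four_block_mat A1 A2 A3 A4" using s A by auto
  have Beq: "A + E = four_block_mat (A1 + Et) A2 A3 A4"
    unfolding Aeq E_def by (subst add_four_block_mat[OF c Et]) (use c in auto)
  have B1c: "A1 + Et \<in> carrier_mat m n" using c Et by simp
  from A(3) have g1: "A * transpose_mat A = (A+E) * transpose_mat (A+E)"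
    and g2: "transpose_mat A * A = transpose_mat (A+E) * (A+E)" and ne: "A \<noteq> A + E"
    and z2: "zero_one_mat (A+E)"
    unfolding gram_mates_def by auto
  have "A1 * transpose_mat A1 + A2 * transpose_mat A2 = (A1+Et) * transpose_mat (A1+Et) + A2 * transpose_mat A2"
  proof -
    obtain R2 R3 R4 where r: "A * transpose_mat A = four_block_mat (A1 * transpose_mat A1 + A2 * transpose_mat A2) R2 R3 R4" "R4 \<in> carrier_mat p p"
      using blk_AAt[OF c] Aeq by blast
    obtain S2 S3 S4 where s: "(A+E) * transpose_mat (A+E) = four_block_mat ((A1+Et) * transpose_mat (A1+Et) + A2 * transpose_mat A2) S2 S3 S4" "S4 \<in> carrier_mat p p"
      using blk_AAt[OF B1c c(2-4)] Beq by metis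
    have eq: "four_block_mat (A1 * transpose_mat A1 + A2 * transpose_mat A2) R2 R3 R4 = four_block_mat ((A1+Et) * transpose_mat (A1+Et) + A2 * transpose_mat A2) S2 S3 S4"
      using r s g1 by simp
    show ?thesis by (rule blk_eq_tl[OF _ _ r(2) s(2) eq]) (use c B1c in auto)
  qed
  then have h1: "A1 * transpose_mat A1 = (A1+Et) * transpose_mat (A1+Et)"
    by (rule add_cancel_mat[where C="A2 * transpose_mat A2", rotated 3]) (use c B1c in auto)
  have "transpose_mat A1 * A1 + transpose_mat A3 * A3 = transpose_mat (A1+Et) * (A1+Et) + transpose_mat A3 * A3"
  proof -
    obtain R2 R3 R4 where r: "transpose_mat A * A = four_block_mat (transpose_mat A1 * A1 + transpose_mat A3 * A3) R2 R3 R4" "R4 \<in> carrier_mat q q"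
      using blk_AtA[OF c] Aeq by blast
    obtain S2 S3 S4 where s: "transpose_mat (A+E) * (A+E) = four_block_mat (transpose_mat (A1+Et) * (A1+Et) + transpose_mat A3 * A3) S2 S3 S4" "S4 \<in> carrier_mat q q"
      using blk_AtA[OF B1c c(2-4)] Beq by metis
    have eq: "four_block_mat (transpose_mat A1 * A1 + transpose_mat A3 * A3) R2 R3 R4 = four_block_mat (transpose_mat (A1+Et) * (A1+Et) + transpose_mat A3 * A3) S2 S3 S4"
      using r s g2 by simp
    show ?thesis by (rule blk_eq_tl[OF _ _ r(2) s(2) eq]) (use c B1c in auto)
  qed
  then have h2: "transpose_mat A1 * A1 = transpose_mat (A1+Et) * (A1+Et)"
    by (rule add_cancel_mat[where C="transpose_mat A3 * A3", rotated 3]) (use c B1c in auto)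
  have ne1: "A1 \<noteq> A1 + Et" using ne unfolding Beq unfolding Aeq by metis
  have z1: "zero_one_mat A1" using A(2) c unfolding Aeq zero_one_mat_def
    by (metis (no_types, lifting) index_mat_four_block carrier_matD trans_less_add1)
  have z1': "zero_one_mat (A1+Et)" using z2 c B1c unfolding Beq zero_one_mat_def
    by (metis (no_types, lifting) index_mat_four_block carrier_matD trans_less_add1)
  have zn: "zero_one_neg_mat Et" using assms(2) Et unfolding zero_one_neg_mat_def
    by (metis (no_types, lifting) index_mat_four_block carrier_matD trans_less_add1 zero_carrier_mat)
  have zl: "zero_line_sums Et"
  proof -
    have t: "transpose_mat E = four_block_mat (transpose_mat Et) (0\<^sub>m n p) (0\<^sub>m q m) (0\<^sub>m q p)"
      unfolding E_def by (subst transpose_four_block_mat[OF Et]) auto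
    have "Et *\<^sub>v ones_vec n = 0\<^sub>v m"
      by (rule blk_mult_ones[OF Et, of q p]) (use assms(3) Et in \<open>simp add: zero_line_sums_def\<close>)
    moreover have "transpose_mat Et *\<^sub>v ones_vec m = 0\<^sub>v n"
      by (rule blk_mult_ones[of _ n m p q]) (use assms(3) Et t Ec in \<open>auto simp: zero_line_sums_def E_def\<close>)
    ultimately show ?thesis using Et unfolding zero_line_sums_def by auto
  qed
  show "realizable Et" unfolding realizable_def gram_mates_def
    using zn zl z1 z1' h1 h2 ne1 c Et by auto
next
  note Et = assms(1)
  assume "realizable Et"
  then obtain A where A: "A \<in> carrier_mat m n" "zero_one_mat A" "gram_mates A (A + Et)"
    unfolding realizable_def using Et by auto
  from A(3) have g1: "A * transpose_mat A = (A+Et) * transpose_mat (A+Et)"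
    and g2: "transpose_mat A * A = transpose_mat (A+Et) * (A+Et)" and ne: "A \<noteq> A + Et"
    and z2: "zero_one_mat (A+Et)"
    unfolding gram_mates_def by auto
  have B: "A + Et \<in> carrier_mat m n" using A Et by simp
  define A' where "A' = four_block_mat A (0\<^sub>m m q) (0\<^sub>m p n) (0\<^sub>m p q)"
  have Beq: "A' + four_block_mat Et (0\<^sub>m m q) (0\<^sub>m p n) (0\<^sub>m p q) = four_block_mat (A + Et) (0\<^sub>m m q) (0\<^sub>m p n) (0\<^sub>m p q)"
    unfolding A'_def by (subst add_four_block_mat[OF A(1) _ _ _ Et]) auto
  have A'c: "A' \<in> carrier_mat (m+p) (n+q)" unfolding A'_def using A by auto
  have zo: "zero_one_mat (four_block_mat X (0\<^sub>m m q) (0\<^sub>m p n) (0\<^sub>m p q))"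
    if "X \<in> carrier_mat m n" "zero_one_mat X" for X
    using that unfolding zero_one_mat_def by auto
  have p1: "four_block_mat X (0\<^sub>m m q) (0\<^sub>m p n) (0\<^sub>m p q) * transpose_mat (four_block_mat X (0\<^sub>m m q) (0\<^sub>m p n) (0\<^sub>m p q))
     = four_block_mat (X * transpose_mat X) (0\<^sub>m m p) (0\<^sub>m p m) (0\<^sub>m p p)"
    if X: "X \<in> carrier_mat m n" for X
    apply (subst transpose_four_block_mat[OF X])
      apply auto[3]
    apply (subst mult_four_block_mat[OF X])
           apply (use X in auto)[7]
    apply (rule cong_four_block_mat)
    using X by auto
  have p2: "transpose_mat (four_block_mat X (0\<^sub>m m q) (0\<^sub>m p n) (0\<^sub>m p q)) * four_block_mat X (0\<^sub>m m q) (0\<^sub>m p n) (0\<^sub>m p q)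
     = four_block_mat (transpose_mat X * X) (0\<^sub>m n q) (0\<^sub>m q n) (0\<^sub>m q q)"
    if X: "X \<in> carrier_mat m n" for X
    apply (subst transpose_four_block_mat[OF X])
      apply auto[3]
    apply (subst mult_four_block_mat[OF _ _ _ _ X])
           apply (use X in auto)[7]
    apply (rule cong_four_block_mat)
    using X by auto
  have ne': "A' \<noteq> four_block_mat (A + Et) (0\<^sub>m m q) (0\<^sub>m p n) (0\<^sub>m p q)"
  proof
    assume "A' = four_block_mat (A + Et) (0\<^sub>m m q) (0\<^sub>m p n) (0\<^sub>m p q)"
    then have "A = A + Et" unfolding A'_def by (rule blk_eq_tl[OF A(1) B, rotated 2]) auto
    then show False using ne by simp
  qed
  have "gram_mates A' (A' + four_block_mat Et (0\<^sub>m m q) (0\<^sub>m p n) (0\<^sub>m p q))"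
    unfolding Beq unfolding gram_mates_def A'_def
    using zo[OF A(1,2)] zo[OF B z2] p1[OF A(1)] p1[OF B] p2[OF A(1)] p2[OF B] g1 g2 ne' A B
    unfolding A'_def by auto
  then show "realizable (four_block_mat Et (0\<^sub>m m q) (0\<^sub>m p n) (0\<^sub>m p q))"
    unfolding realizable_def using assms(2,3) A'c zo[OF A(1,2)] Et unfolding A'_def by auto
qed

end
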